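(* Let $s \in \{2,3\}$ and let $C_5 \rtimes_s C_4$ be the group generated by $x, y$ with relations $x^4 = 1$, $y^5 = 1$, $yx = xy^s$; let $H = \langle y \rangle$ and $N_i = x^iH$. Let $S$ be a sequence in $C_5 \rtimes_s C_4$ with $|S| = 7$. If all elements of $S$ belong to one coset $N_i$ with $i \in \{1,3\}$, then $S$ is not free of product-$1$ subsequences.
   Context: A sequence in a finite group $G$ is a finite list of elements of $G$, repetition allowed. A non-empty subsequence $(g_{n_1},\dots,g_{n_k})$ is a product-$1$ subsequence if $g_{\sigma(n_1)}\cdots g_{\sigma(n_k)} = 1$ for some permutation $\sigma$ of $\{n_1,\dots,n_k\}$; $S$ is free of product-$1$ subsequences if it has no such subsequence. *)

theory Defs
  imports "HOL-Algebra.Algebra"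
begin

text \<open>A product-1 subsequence
is given by a non-empty list of distinct positions (the order of the list encodes the
permutation) whose product in that order is the identity.\<close>

definition product_one_free :: "('a, 'b) monoid_scheme \<Rightarrow> 'a list \<Rightarrow> bool" where
  "product_one_free G S \<longleftrightarrow>
     \<not> (\<exists>js. js \<noteq> [] \<and> distinct js \<and> set js \<subseteq> {..<length S} \<and>
            foldr (\<lambda>g acc. g \<otimes>\<^bsub>G\<^esub> acc) (map (\<lambda>j. S ! j) js) \<one>\<^bsub>G\<^esub> = \<one>\<^bsub>G\<^esub>)"

end

theory Submission
  imports Defs
begin

lemma pigeon:
  fixes a :: "nat \<Rightarrow> nat"
  assumes "finite A" "finite B" "a ` A \<subseteq> B" "card B < card A"
  shows "\<exists>p\<in>A. \<exists>q\<in>A. p \<noteq> q \<and> a p = a q"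
proof (rule ccontr)
  assume "\<not> ?thesis"
  then have "inj_on a A" unfolding inj_on_def by blast
  then have "card (a ` A) = card A" by (rule card_image)
  moreover have "card (a ` A) \<le> card B" using assms card_mono by blast
  ultimately show False using assms by simp
qed

lemma comb:
  fixes a :: "nat \<Rightarrow> nat" and t :: nat
  assumes a: "\<forall>k<7. a k < 5" and t: "t \<in> {2,3,8,27}"
  shows "\<exists>j1 j2 j3 j4. distinct [j1,j2,j3,j4] \<and> j1<7 \<and> j2<7 \<and> j3<7 \<and> j4<7 \<and>
     (t^3 * a j1 + t^2 * a j2 + t * a j3 + a j4) mod 5 = 0"
proof (cases "\<exists>v<5. v \<notin> a ` {..<7}")
  case True
  then obtain v where v: "v < 5" "v \<notin> a ` {..<7}" by blast
  have sub: "a ` A \<subseteq> {..<5} - {v}" if "A \<subseteq> {..<7}" for A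
    using a v that by auto
  have cB: "card ({..<5::nat} - {v}) = 4" using v by simp
  obtain p1 p2 where p: "p1 < 7" "p2 < 7" "p1 \<noteq> p2" "a p1 = a p2"
    using pigeon[of "{..<7}" "{..<5} - {v}" a] sub[of "{..<7}"] cB by auto
  have cA: "card ({..<7::nat} - {p1,p2}) = 5" using p by (simp add: card_Diff_subset)
  obtain q1 q2 where q: "q1 \<in> {..<7} - {p1,p2}" "q2 \<in> {..<7} - {p1,p2}" "q1 \<noteq> q2" "a q1 = a q2"
    using pigeon[of "{..<7} - {p1,p2}" "{..<5} - {v}" a] sub[of "{..<7} - {p1,p2}"] cB cA by fastforce
  have e: "t^3 * a p1 + t^2 * a q1 + t * a p2 + a q2 = (t*t+1) * (t * a p1 + a q1)"
    using p q by (simp add: algebra_simps power2_eq_square power3_eq_cube)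
  have "5 dvd (t*t+1)" using t by auto
  then have "5 dvd (t*t+1) * (t * a p1 + a q1)" by (rule dvd_mult2)
  then have "(t^3 * a p1 + t^2 * a q1 + t * a p2 + a q2) mod 5 = 0" unfolding e
    using dvd_imp_mod_0 by blast
  then show ?thesis using p q by (intro exI[of _ p1] exI[of _ q1] exI[of _ p2] exI[of _ q2]) auto
next
  case False
  then have all: "\<forall>v<5. \<exists>k<7. a k = v" by auto
  obtain k0 k1 k2 k3 k4 where k: "k0<7" "a k0 = 0" "k1<7" "a k1 = 1" "k2<7" "a k2 = 2"
     "k3<7" "a k3 = 3" "k4<7" "a k4 = 4"
    using all[rule_format, of 0] all[rule_format, of 1] all[rule_format, of 2]
      all[rule_format, of 3] all[rule_format, of 4] by auto
  have d: "distinct [k0,k1,k2,k3,k4]" using k by auto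
  from t show ?thesis
  proof (elim insertE emptyE)
    assume tv: "t = 2"
    have e: "(t^3 * a k1 + t^2 * a k2 + t * a k0 + a k4) mod 5 = 0" by (simp add: k tv)
    have dd: "distinct [k1,k2,k0,k4]" using d by auto
    show ?thesis
      by (intro exI[of _ k1] exI[of _ k2] exI[of _ k0] exI[of _ k4] conjI dd e k)
  next
    assume tv: "t = 27"
    have e: "(t^3 * a k1 + t^2 * a k2 + t * a k0 + a k4) mod 5 = 0" by (simp add: k tv)
    have dd: "distinct [k1,k2,k0,k4]" using d by auto
    show ?thesis
      by (intro exI[of _ k1] exI[of _ k2] exI[of _ k0] exI[of _ k4] conjI dd e k)
  next
    assume tv: "t = 3"
    have e: "(t^3 * a k1 + t^2 * a k4 + t * a k0 + a k2) mod 5 = 0" by (simp add: k tv)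
    have dd: "distinct [k1,k4,k0,k2]" using d by auto
    show ?thesis
      by (intro exI[of _ k1] exI[of _ k4] exI[of _ k0] exI[of _ k2] conjI dd e k)
  next
    assume tv: "t = 8"
    have e: "(t^3 * a k1 + t^2 * a k4 + t * a k0 + a k2) mod 5 = 0" by (simp add: k tv)
    have dd: "distinct [k1,k4,k0,k2]" using d by auto
    show ?thesis
      by (intro exI[of _ k1] exI[of _ k4] exI[of _ k0] exI[of _ k2] conjI dd e k)
  qed
qed

lemma (in group) pow_red:
  assumes y: "y \<in> carrier G" and y5: "y [^] (5::nat) = \<one>"
  shows "y [^] (k::int) = y [^] (nat (k mod 5))"
proof -
  have "k = 5 * (k div 5) + k mod 5" by simp
  then have "y [^] k = y [^] (5 * (k div 5)) \<otimes> y [^] (k mod 5)"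
    by (metis int_pow_mult y)
  also have "y [^] (5 * (k div 5)) = (y [^] (5::int)) [^] (k div 5)"
    using int_pow_pow[OF y] by simp
  also have "y [^] (5::int) = \<one>" using y5 int_pow_int[of G y 5] by simp
  also have "y [^] (k mod 5) = y [^] (nat (k mod 5))"
    using int_pow_int[of G y "nat (k mod 5)"] by simp
  finally show ?thesis using y by simp
qed

lemma (in group) comm1:
  assumes x: "x \<in> carrier G" and y: "y \<in> carrier G" and r: "y \<otimes> x = x \<otimes> y [^] (s::nat)"
  shows "y [^] (a::nat) \<otimes> x = x \<otimes> y [^] (s*a)"
proof (induction a)
  case 0 then show ?case using x by simp
next
  case (Suc a)
  have "y [^] Suc a \<otimes> x = y [^] a \<otimes> (y \<otimes> x)" using x y by (simp add: m_assoc)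
  also have "\<dots> = (y [^] a \<otimes> x) \<otimes> y [^] s" using x y r by (simp add: m_assoc)
  also have "\<dots> = x \<otimes> (y [^] (s*a) \<otimes> y [^] s)" using Suc x y by (simp add: m_assoc)
  also have "\<dots> = x \<otimes> y [^] (s * Suc a)" using y by (simp add: nat_pow_mult add.commute)
  finally show ?case .
qed

lemma (in group) comm2:
  assumes x: "x \<in> carrier G" and y: "y \<in> carrier G" and r: "y \<otimes> x = x \<otimes> y [^] (s::nat)"
  shows "y [^] (a::nat) \<otimes> x [^] (n::nat) = x [^] n \<otimes> y [^] (s^n*a)"
proof (induction n arbitrary: a)
  case 0 then show ?case using y by simp
next
  case (Suc n)
  have "y [^] a \<otimes> x [^] Suc n = (y [^] a \<otimes> x [^] n) \<otimes> x" using x y by (simp add: m_assoc)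
  also have "\<dots> = x [^] n \<otimes> (y [^] (s^n*a) \<otimes> x)" using Suc x y by (simp add: m_assoc)
  also have "\<dots> = x [^] n \<otimes> (x \<otimes> y [^] (s*(s^n*a)))" using comm1[OF x y r] by simp
  also have "\<dots> = x [^] Suc n \<otimes> y [^] (s^Suc n*a)" using x y by (simp add: m_assoc mult.assoc)
  finally show ?case .
qed

lemma (in group) step:
  assumes x: "x \<in> carrier G" and y: "y \<in> carrier G" and r: "y \<otimes> x = x \<otimes> y [^] (s::nat)"
  shows "(x [^] (i::nat) \<otimes> y [^] (a::nat)) \<otimes> (x [^] (n::nat) \<otimes> y [^] (e::nat))
     = x [^] (i+n) \<otimes> y [^] (s^n*a + e)"
proof -
  have "(x [^] i \<otimes> y [^] a) \<otimes> (x [^] n \<otimes> y [^] e) = x [^] i \<otimes> (y [^] a \<otimes> x [^] n) \<otimes> y [^] e"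
    using x y by (simp add: m_assoc)
  also have "\<dots> = x [^] i \<otimes> x [^] n \<otimes> (y [^] (s^n*a) \<otimes> y [^] e)"
    using comm2[OF x y r] x y by (simp add: m_assoc)
  also have "\<dots> = x [^] (i+n) \<otimes> y [^] (s^n*a + e)" using x y by (simp add: nat_pow_mult)
  finally show ?thesis .
qed

theorem proposition2:
  fixes G (structure) and x y :: 'a and s i :: nat and S :: "'a list"
  assumes "group G"
    and "s \<in> {2, 3}"
    and "x \<in> carrier G" and "y \<in> carrier G"
    and "carrier G = generate G {x, y}"
    and "x [^] (4::nat) = \<one>" and "y [^] (5::nat) = \<one>"
    and "y \<otimes> x = x \<otimes> y [^] s"
    and "order G = 20"
    and "set S \<subseteq> carrier G" and "length S = 7"
    and "i \<in> {1, 3}"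
    and "set S \<subseteq> x [^] i <# generate G {y}"
  shows "\<not> product_one_free G S"
proof -
  interpret group G by fact
  note x = assms(3) and y = assms(4) and r = assms(8)
  have rep: "\<exists>b::nat. b < 5 \<and> S ! k = x [^] i \<otimes> y [^] b" if "k < 7" for k
  proof -
    have "S ! k \<in> x [^] i <# generate G {y}" using assms(11,13) that nth_mem by force
    then obtain h where h: "h \<in> generate G {y}" "S ! k = x [^] i \<otimes> h"
      unfolding l_coset_def by blast
    have "h \<in> { y [^] (k :: int) | k. k \<in> UNIV }" using h(1) generate_pow[OF y] by simp
    then obtain z :: int where "h = y [^] z" by blast
    then have "h = y [^] (nat (z mod 5))" using pow_red[OF y assms(7), of z] by (rule trans)
    moreover have "nat (z mod 5) < 5" by simp
    ultimately show ?thesis using h by blast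
  qed
  have "\<forall>k. \<exists>b::nat. k < 7 \<longrightarrow> b < 5 \<and> S ! k = x [^] i \<otimes> y [^] b"
  proof
    fix k show "\<exists>b::nat. k < 7 \<longrightarrow> b < 5 \<and> S ! k = x [^] i \<otimes> y [^] b"
    proof (cases "k < 7")
      case True then obtain b :: nat where "b < 5 \<and> S ! k = x [^] i \<otimes> y [^] b" using rep by blast
      then show ?thesis by blast
    qed simp
  qed
  then have "\<exists>a::nat\<Rightarrow>nat. \<forall>k. k < 7 \<longrightarrow> a k < 5 \<and> S ! k = x [^] i \<otimes> y [^] (a k)" by (rule choice)
  then obtain a :: "nat \<Rightarrow> nat" where a: "\<forall>k<7. a k < 5 \<and> S ! k = x [^] i \<otimes> y [^] (a k)" ..
  define t where "t = s ^ i"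
  have t: "t \<in> {2,3,8,27}" using assms(2,12) unfolding t_def by auto
  obtain j1 j2 j3 j4 where j: "distinct [j1,j2,j3,j4]" "j1<7" "j2<7" "j3<7" "j4<7"
    "(t^3 * a j1 + t^2 * a j2 + t * a j3 + a j4) mod 5 = 0"
  proof -
    have a5: "\<forall>k<7. a k < 5" using a by blast
    show ?thesis using comb[OF a5 t] by (elim exE conjE) (rule that; assumption)
  qed
  define E where "E = t^3 * a j1 + t^2 * a j2 + t * a j3 + a j4"
  have e1: "s^(i+(i+i)) = t^3" "s^(i+i) = t^2" "s^i = t"
    unfolding t_def by (simp_all add: power_add power3_eq_cube power2_eq_square)
  have e2: "i+(i+(i+i)) = 4*i" by simp
  have x4: "x [^] (4*i) = \<one>" using assms(6) nat_pow_pow[OF x, of 4 i] by simp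
  have "5 dvd E" using j(6) unfolding E_def by (simp add: dvd_eq_mod_eq_0)
  then obtain q where "E = 5 * q" by (elim dvdE)
  then have yE: "y [^] E = \<one>" using assms(7) nat_pow_pow[OF y, of 5 q] by simp
  have p: "foldr (\<lambda>g acc. g \<otimes> acc) (map (\<lambda>j. S ! j) [j1,j2,j3,j4]) \<one> = \<one>"
  proof -
    have "foldr (\<lambda>g acc. g \<otimes> acc) (map (\<lambda>j. S ! j) [j1,j2,j3,j4]) \<one>
       = (x [^] i \<otimes> y [^] a j1) \<otimes> ((x [^] i \<otimes> y [^] a j2) \<otimes> ((x [^] i \<otimes> y [^] a j3)
           \<otimes> (x [^] i \<otimes> y [^] a j4)))"
      using a j(2-5) x y by simp
    also have "\<dots> = x [^] (i+(i+(i+i))) \<otimes> y [^] (s^(i+(i+i))*a j1 + (s^(i+i)*a j2 + (s^i * a j3 + a j4)))"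
      by (simp only: step[OF x y r])
    also have "\<dots> = x [^] (4*i) \<otimes> y [^] E"
      unfolding e1 e2 E_def by (simp add: add.assoc)
    also have "\<dots> = \<one>" using x4 yE by simp
    finally show ?thesis .
  qed
  have "set [j1,j2,j3,j4] \<subseteq> {..<length S}" using j assms(11) by auto
  then show ?thesis unfolding product_one_free_def
    using p j(1) by blast
qed

end
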